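(* Let $\mathbb{K}$ be an algebraically closed field of characteristic $0$ and $\alpha,\alpha'\in\mathbb{K}$. The down-up algebras $A(\alpha,0,0)$ and $A(\alpha',0,0)$ are isomorphic as $\mathbb{K}$-algebras if and only if $\alpha=\alpha'$.
   Context: For $(\alpha,\beta,\gamma)\in\mathbb{K}^3$, the down-up algebra $A(\alpha,\beta,\gamma)$ is the quotient of the free associative algebra $\mathbb{K}\langle d,u\rangle$ by the two-sided ideal generated by $d^2u-(\alpha dud+\beta ud^2+\gamma d)$ and $du^2-(\alpha udu+\beta u^2d+\gamma u)$. *)

theory Defs
  imports "HOL-Algebra.QuotRing" "HOL-Algebra.Ideal" "HOL-Computational_Algebra.Polynomial"
begin

definition alg_closed :: "'k::field itself \<Rightarrow> bool" where
  "alg_closed _ \<longleftrightarrow> (\<forall>p::'k poly. degree p > 0 \<longrightarrow> (\<exists>x. poly p x = 0))"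

datatype gen = D | U

text \<open>The free associative algebra K<d,u>: finitely supported coefficient
functions on words, with concatenation (convolution) product.\<close>
definition fa_mult :: "(gen list \<Rightarrow> 'k::field) \<Rightarrow> (gen list \<Rightarrow> 'k) \<Rightarrow> gen list \<Rightarrow> 'k" where
  "fa_mult f g = (\<lambda>w. \<Sum>i\<le>length w. f (take i w) * g (drop i w))"

definition fa_monom :: "gen list \<Rightarrow> 'k::field \<Rightarrow> gen list \<Rightarrow> 'k" where
  "fa_monom w c = (\<lambda>v. if v = w then c else 0)"

definition free_alg :: "(gen list \<Rightarrow> 'k::field) ring" where
  "free_alg = \<lparr> carrier = {f. finite {w. f w \<noteq> 0}},
               monoid.mult = fa_mult,
               one = fa_monom [] 1,
               zero = (\<lambda>w. 0),
               add = (\<lambda>f g w. f w + g w) \<rparr>"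

definition du_rel1 :: "'k::field \<Rightarrow> 'k \<Rightarrow> 'k \<Rightarrow> gen list \<Rightarrow> 'k" where
  "du_rel1 \<alpha> \<beta> \<gamma> = (\<lambda>w. fa_monom [D,D,U] 1 w
      - (fa_monom [D,U,D] \<alpha> w + fa_monom [U,D,D] \<beta> w + fa_monom [D] \<gamma> w))"

definition du_rel2 :: "'k::field \<Rightarrow> 'k \<Rightarrow> 'k \<Rightarrow> gen list \<Rightarrow> 'k" where
  "du_rel2 \<alpha> \<beta> \<gamma> = (\<lambda>w. fa_monom [D,U,U] 1 w
      - (fa_monom [U,D,U] \<alpha> w + fa_monom [U,U,D] \<beta> w + fa_monom [U] \<gamma> w))"

definition du_ideal :: "'k::field \<Rightarrow> 'k \<Rightarrow> 'k \<Rightarrow> (gen list \<Rightarrow> 'k) set" where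
  "du_ideal \<alpha> \<beta> \<gamma> = genideal free_alg {du_rel1 \<alpha> \<beta> \<gamma>, du_rel2 \<alpha> \<beta> \<gamma>}"

definition down_up :: "'k::field \<Rightarrow> 'k \<Rightarrow> 'k \<Rightarrow> (gen list \<Rightarrow> 'k) set ring" where
  "down_up \<alpha> \<beta> \<gamma> = free_alg Quot (du_ideal \<alpha> \<beta> \<gamma>)"

definition du_scalar :: "'k::field \<Rightarrow> 'k \<Rightarrow> 'k \<Rightarrow> 'k \<Rightarrow> (gen list \<Rightarrow> 'k) set" where
  "du_scalar \<alpha> \<beta> \<gamma> c = du_ideal \<alpha> \<beta> \<gamma> +>\<^bsub>free_alg\<^esub> fa_monom [] c"

text \<open>Isomorphism of K-algebras: ring isomorphism compatible with the structure maps
  (equivalently, a K-linear ring isomorphism).\<close>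
definition down_up_iso :: "'k::field \<Rightarrow> 'k \<Rightarrow> 'k \<Rightarrow> 'k \<Rightarrow> 'k \<Rightarrow> 'k \<Rightarrow> bool" where
  "down_up_iso \<alpha> \<beta> \<gamma> \<alpha>' \<beta>' \<gamma>' \<longleftrightarrow>
     (\<exists>\<phi>. \<phi> \<in> ring_iso (down_up \<alpha> \<beta> \<gamma>) (down_up \<alpha>' \<beta>' \<gamma>') \<and>
          (\<forall>c. \<phi> (du_scalar \<alpha> \<beta> \<gamma> c) = du_scalar \<alpha>' \<beta>' \<gamma>' c))"

end

theory Submission
  imports Defs
begin


definition supp :: "(gen list \<Rightarrow> 'k::field) \<Rightarrow> gen list set" where
  "supp f = {w. f w \<noteq> 0}"

lemma tri_sum:
  fixes T :: "nat \<Rightarrow> nat \<Rightarrow> 'a::comm_monoid_add"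
  shows "(\<Sum>j\<le>n. \<Sum>i=j..n. T j i) = (\<Sum>i\<le>n. \<Sum>j\<le>i. T j i)"
proof (induction n)
  case 0 then show ?case by simp
next
  case (Suc n)
  have "(\<Sum>j\<le>Suc n. \<Sum>i=j..Suc n. T j i) = (\<Sum>j\<le>n. \<Sum>i=j..Suc n. T j i) + T (Suc n) (Suc n)"
    by simp
  also have "(\<Sum>j\<le>n. \<Sum>i=j..Suc n. T j i) = (\<Sum>j\<le>n. (\<Sum>i=j..n. T j i) + T j (Suc n))"
    by (rule sum.cong) auto
  also have "\<dots> = (\<Sum>j\<le>n. \<Sum>i=j..n. T j i) + (\<Sum>j\<le>n. T j (Suc n))"
    by (simp add: sum.distrib)
  finally show ?case using Suc by (simp add: add.assoc)
qed

lemma fa_mult_assoc: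
  fixes f g h :: "gen list \<Rightarrow> 'k::field"
  shows "fa_mult (fa_mult f g) h = fa_mult f (fa_mult g h)"
proof
  fix w :: "gen list"
  define n where "n = length w"
  define T where "T j i = f (take j w) * g (take (i-j) (drop j w)) * h (drop i w)" for j i
  have L: "fa_mult (fa_mult f g) h w = (\<Sum>i\<le>n. \<Sum>j\<le>i. T j i)"
    unfolding fa_mult_def n_def T_def
    by (rule sum.cong) (auto simp: sum_distrib_right min_def take_take drop_take intro!: sum.cong)
  have "fa_mult f (fa_mult g h) w = (\<Sum>j\<le>n. \<Sum>k\<le>n-j. T j (j+k))"
    unfolding fa_mult_def n_def T_def
    by (rule sum.cong) (auto simp: sum_distrib_left mult.assoc add.commute intro!: sum.cong)
  also have "\<dots> = (\<Sum>j\<le>n. \<Sum>i=j..n. T j i)"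
  proof (rule sum.cong)
    fix j assume "j \<in> {..n}"
    then show "(\<Sum>k\<le>n-j. T j (j+k)) = (\<Sum>i=j..n. T j i)"
      using sum.shift_bounds_cl_nat_ivl[of "T j" 0 j "n-j"] 
      by (simp add: atLeast0AtMost add.commute)
  qed simp
  finally show "fa_mult (fa_mult f g) h w = fa_mult f (fa_mult g h) w"
    using L tri_sum by metis
qed



lemma fa_carrier: "carrier free_alg = {f. finite {w. f w \<noteq> 0}}"
  and fa_mult_eq: "monoid.mult free_alg = fa_mult"
  and fa_one: "monoid.one free_alg = fa_monom [] 1"
  and fa_zero: "ring.zero free_alg = (\<lambda>w. 0)"
  and fa_add: "ring.add free_alg = (\<lambda>f g w. f w + g w)"
  by (simp_all add: free_alg_def)

lemma supp_mult:
  "{w. fa_mult f g w \<noteq> 0} \<subseteq> (\<lambda>(a,b). a @ b) ` ({w. f w \<noteq> 0} \<times> {w. g w \<noteq> 0})"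
proof
  fix w assume "w \<in> {w. fa_mult f g w \<noteq> 0}"
  then have "(\<Sum>i\<le>length w. f (take i w) * g (drop i w)) \<noteq> 0" by (simp add: fa_mult_def)
  then obtain i where "f (take i w) * g (drop i w) \<noteq> 0" by (meson sum.neutral)
  then show "w \<in> (\<lambda>(a,b). a @ b) ` ({w. f w \<noteq> 0} \<times> {w. g w \<noteq> 0})"
    by (auto intro!: image_eqI[where x="(take i w, drop i w)"])
qed

lemma finite_mult:
  assumes "finite {w. f w \<noteq> 0}" "finite {w. g w \<noteq> 0}"
  shows "finite {w. fa_mult f g w \<noteq> 0}"
  by (rule finite_subset[OF supp_mult]) (use assms in auto)

lemma fa_l_one: "fa_mult (fa_monom [] 1) f = f"
proof
  fix w :: "gen list"
  have "fa_mult (fa_monom [] 1) f w = (\<Sum>i\<le>length w. (if i = 0 then f w else 0))"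
    unfolding fa_mult_def fa_monom_def by (rule sum.cong) auto
  then show "fa_mult (fa_monom [] 1) f w = f w" by simp
qed

lemma fa_r_one: "fa_mult f (fa_monom [] 1) = f"
proof
  fix w :: "gen list"
  have "fa_mult f (fa_monom [] 1) w = (\<Sum>i\<le>length w. (if i = length w then f w else 0))"
    unfolding fa_mult_def fa_monom_def by (rule sum.cong) auto
  then show "fa_mult f (fa_monom [] 1) w = f w" by simp
qed

lemma fa_l_distr: "fa_mult (\<lambda>w. f w + g w) h = (\<lambda>w. fa_mult f h w + fa_mult g h w)"
  unfolding fa_mult_def by (auto simp: distrib_right sum.distrib)

lemma fa_r_distr: "fa_mult h (\<lambda>w. f w + g w) = (\<lambda>w. fa_mult h f w + fa_mult h g w)"
  unfolding fa_mult_def by (auto simp: distrib_left sum.distrib)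

lemma finite_add:
  assumes "finite {w. f w \<noteq> 0}" "finite {w. g w \<noteq> 0}"
  shows "finite {w. f w + g w \<noteq> (0::'k::field)}"
  by (rule finite_subset[of _ "{w. f w \<noteq> 0} \<union> {w. g w \<noteq> 0}"]) (use assms in auto)

lemma fa_monom_finite: "finite {v. fa_monom w c v \<noteq> 0}"
  by (rule finite_subset[of _ "{w}"]) (auto simp: fa_monom_def)

lemma free_alg_ring: "ring (free_alg :: (gen list \<Rightarrow> 'k::field) ring)"
proof (rule ringI)
  show "abelian_group (free_alg :: (gen list \<Rightarrow> 'k::field) ring)"
  proof (rule abelian_groupI, simp_all add: fa_carrier fa_zero fa_add finite_add)
    show "\<And>x. finite {w. x w \<noteq> 0} \<Longrightarrow> \<exists>y. finite {w. y w \<noteq> 0} \<and> (\<lambda>w. y w + x w) = (\<lambda>w. 0::'k)"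
      by (rule_tac x="\<lambda>w. - x w" in exI) auto
  qed (auto simp: add.assoc add.commute)
  show "monoid (free_alg :: (gen list \<Rightarrow> 'k::field) ring)"
    by (rule monoidI) (auto simp: fa_carrier fa_mult_eq fa_one finite_mult fa_monom_finite
        fa_l_one fa_r_one fa_mult_assoc)
qed (simp_all add: fa_carrier fa_mult_eq fa_add fa_l_distr fa_r_distr)



datatype 'a t2 = T2 'a 'a 'a

fun d1 where "d1 (T2 a s b) = a"
fun of2 where "of2 (T2 a s b) = s"
fun d2 where "d2 (T2 a s b) = b"

lemma t2_eq: "x = y \<longleftrightarrow> d1 x = d1 y \<and> of2 x = of2 y \<and> d2 x = d2 y"
  by (cases x; cases y) auto

instantiation t2 :: (comm_ring_1) ring_1
begin
definition "zero_t2 = T2 0 0 0"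
definition "one_t2 = T2 1 0 1"
definition "plus_t2 x y = T2 (d1 x + d1 y) (of2 x + of2 y) (d2 x + d2 y)"
definition "minus_t2 x y = T2 (d1 x - d1 y) (of2 x - of2 y) (d2 x - d2 y)"
definition "uminus_t2 x = T2 (- d1 x) (- of2 x) (- d2 x)"
definition "times_t2 x y = T2 (d1 x * d1 y) (d1 x * of2 y + of2 x * d2 y) (d2 x * d2 y)"
instance
  by standard (auto simp: t2_eq zero_t2_def one_t2_def plus_t2_def minus_t2_def uminus_t2_def
      times_t2_def algebra_simps)
end

lemma t2_simps[simp]:
  "d1 0 = 0" "of2 0 = 0" "d2 0 = 0" "d1 1 = 1" "of2 1 = 0" "d2 1 = 1"
  "d1 (x + y) = d1 x + d1 y" "of2 (x + y) = of2 x + of2 y" "d2 (x + y) = d2 x + d2 y"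
  "d1 (x - y) = d1 x - d1 y" "of2 (x - y) = of2 x - of2 y" "d2 (x - y) = d2 x - d2 y"
  "d1 (- x) = - d1 x" "of2 (- x) = - of2 x" "d2 (- x) = - d2 x"
  "d1 (x * y) = d1 x * d1 y" "of2 (x * y) = d1 x * of2 y + of2 x * d2 y" "d2 (x * y) = d2 x * d2 y"
  by (simp_all add: zero_t2_def one_t2_def plus_t2_def minus_t2_def uminus_t2_def times_t2_def)

lemma t2_sum[simp]:
  "d1 (sum f A) = (\<Sum>a\<in>A. d1 (f a))" "of2 (sum f A) = (\<Sum>a\<in>A. of2 (f a))"
  "d2 (sum f A) = (\<Sum>a\<in>A. d2 (f a))"
  by (induction A rule: infinite_finite_induct; simp)+

definition sc :: "'a::comm_ring_1 \<Rightarrow> 'a t2" where "sc c = T2 c 0 c"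

lemma sc_simps[simp]: "d1 (sc c) = c" "of2 (sc c) = 0" "d2 (sc c) = c"
  by (simp_all add: sc_def)

lemma sc_central: "sc c * z = z * sc c"
  by (simp add: t2_eq mult.commute)

lemma sc_hom: "sc (a + b) = sc a + sc b" "sc (a * b) = sc a * sc b" "sc 0 = 0" "sc 1 = 1"
  "sc (- a) = - sc a" "sc (a - b) = sc a - sc b"
  by (simp_all add: t2_eq)

lemma sc_sum: "sc (sum f A) = (\<Sum>a\<in>A. sc (f a))"
  by (simp add: t2_eq)

definition gv :: "'a \<Rightarrow> 'a \<Rightarrow> gen \<Rightarrow> 'a" where
  "gv x y g = (case g of D \<Rightarrow> x | U \<Rightarrow> y)"

definition wev :: "'a::monoid_mult \<Rightarrow> 'a \<Rightarrow> gen list \<Rightarrow> 'a" where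
  "wev x y w = prod_list (map (gv x y) w)"

lemma wev_simps[simp]: "wev x y [] = 1" "wev x y (g # w) = gv x y g * wev x y w"
  "wev x y (v @ w) = wev x y v * wev x y w"
  by (simp_all add: wev_def)

definition ev :: "'k::field t2 \<Rightarrow> 'k t2 \<Rightarrow> (gen list \<Rightarrow> 'k) \<Rightarrow> 'k t2" where
  "ev x y f = (\<Sum>w\<in>{w. f w \<noteq> 0}. sc (f w) * wev x y w)"

lemma ev_superset:
  assumes "finite W" "{w. f w \<noteq> 0} \<subseteq> W"
  shows "ev x y f = (\<Sum>w\<in>W. sc (f w) * wev x y w)"
  unfolding ev_def by (rule sum.mono_neutral_left) (use assms in \<open>auto simp: sc_hom\<close>)

lemma ev_add:
  assumes "finite {w. f w \<noteq> 0}" "finite {w. g w \<noteq> 0}"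
  shows "ev x y (\<lambda>w. f w + g w) = ev x y f + ev x y g"
proof -
  let ?W = "{w. f w \<noteq> 0} \<union> {w. g w \<noteq> 0}"
  have "ev x y (\<lambda>w. f w + g w) = (\<Sum>w\<in>?W. sc (f w + g w) * wev x y w)"
    by (rule ev_superset) (use assms in auto)
  also have "\<dots> = (\<Sum>w\<in>?W. sc (f w) * wev x y w) + (\<Sum>w\<in>?W. sc (g w) * wev x y w)"
    by (simp add: sc_hom distrib_right sum.distrib)
  also have "\<dots> = ev x y f + ev x y g"
    by (subst (1 2) ev_superset[where W="?W"]) (use assms in auto)
  finally show ?thesis .
qed

lemma ev_monom: "ev x y (fa_monom w c) = sc c * wev x y w"
  by (subst ev_superset[where W="{w}"]) (auto simp: fa_monom_def)

lemma ev_mult: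
  assumes ff: "finite {w. f w \<noteq> 0}" and fg: "finite {w. g w \<noteq> 0}"
  shows "ev x y (fa_mult f g) = ev x y f * ev x y g"
proof -
  define Sf where "Sf = {w. f w \<noteq> 0}"
  define Sg where "Sg = {w. g w \<noteq> 0}"
  define W where "W = (\<lambda>(a,b). a @ b) ` (Sf \<times> Sg)"
  have fW: "finite W" unfolding W_def Sf_def Sg_def using ff fg by auto
  define F where "F p = sc (f (take (snd p) (fst p))) * sc (g (drop (snd p) (fst p))) * wev x y (fst p)" for p
  define Z where "Z = {p \<in> Sigma W (\<lambda>w. {..length w}). take (snd p) (fst p) \<in> Sf \<and> drop (snd p) (fst p) \<in> Sg}"
  have "ev x y (fa_mult f g) = (\<Sum>w\<in>W. sc (fa_mult f g w) * wev x y w)"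
    by (rule ev_superset[OF fW]) (use supp_mult in \<open>auto simp: W_def Sf_def Sg_def\<close>)
  also have "\<dots> = (\<Sum>w\<in>W. \<Sum>i\<le>length w. F (w, i))"
    by (simp add: fa_mult_def F_def sc_sum sc_hom sum_distrib_right)
  also have "\<dots> = (\<Sum>p\<in>Sigma W (\<lambda>w. {..length w}). F p)"
    using sum.Sigma[OF fW, of "\<lambda>w. {..length w}" "\<lambda>w i. F (w,i)"] by simp
  also have "\<dots> = (\<Sum>p\<in>Z. F p)"
    by (rule sum.mono_neutral_right) (auto simp: Z_def F_def Sf_def Sg_def sc_hom intro: finite_SigmaI fW)
  also have "\<dots> = (\<Sum>q\<in>Sf \<times> Sg. sc (f (fst q)) * sc (g (snd q)) * wev x y (fst q @ snd q))"
  proof (rule sum.reindex_bij_witness[of _ "\<lambda>(a,b). (a @ b, length a)" "\<lambda>(w,i). (take i w, drop i w)"])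
    fix p assume "p \<in> Z"
    then obtain w i where p: "p = (w,i)" "i \<le> length w" "take i w \<in> Sf" "drop i w \<in> Sg"
      by (auto simp: Z_def)
    show "(case (case p of (w, i) \<Rightarrow> (take i w, drop i w)) of (a, b) \<Rightarrow> (a @ b, length a)) = p"
      using p by simp
    show "(case p of (w, i) \<Rightarrow> (take i w, drop i w)) \<in> Sf \<times> Sg" using p by simp
    show "sc (f (fst (case p of (w, i) \<Rightarrow> (take i w, drop i w)))) *
         sc (g (snd (case p of (w, i) \<Rightarrow> (take i w, drop i w)))) *
         wev x y (fst (case p of (w, i) \<Rightarrow> (take i w, drop i w)) @
           snd (case p of (w, i) \<Rightarrow> (take i w, drop i w))) = F p"
      using p by (simp add: F_def del: wev_simps(3))
  next
    fix q assume "q \<in> Sf \<times> Sg"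
    then obtain a b where q: "q = (a,b)" "a \<in> Sf" "b \<in> Sg" by auto
    show "(case (case q of (a, b) \<Rightarrow> (a @ b, length a)) of (w, i) \<Rightarrow> (take i w, drop i w)) = q"
      using q by simp
    show "(case q of (a, b) \<Rightarrow> (a @ b, length a)) \<in> Z"
      using q by (auto simp: Z_def W_def)
  qed
  also have "\<dots> = (\<Sum>a\<in>Sf. \<Sum>b\<in>Sg. (sc (f a) * wev x y a) * (sc (g b) * wev x y b))"
  proof -
    have key: "sc c * sc d * (p * q) = (sc c * p) * (sc d * q)" for c d and p q :: "'a t2"
      by (metis mult.assoc sc_central)
    show ?thesis
      by (simp add: sum.cartesian_product split_def key)
  qed
  also have "\<dots> = ev x y f * ev x y g"
    by (simp add: ev_def Sf_def Sg_def sum_product)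
  finally show ?thesis .
qed



definition rel :: "'k::field \<Rightarrow> 'k t2 \<Rightarrow> 'k t2 \<Rightarrow> bool" where
  "rel \<beta> x y \<longleftrightarrow> x * x * y = sc \<beta> * (x * y * x) \<and> x * y * y = sc \<beta> * (y * x * y)"

lemma monom_mult: "fa_mult (fa_monom a c) (fa_monom b d) = fa_monom (a @ b) (c * d)"
proof
  fix v :: "gen list"
  show "fa_mult (fa_monom a c) (fa_monom b d) v = fa_monom (a @ b) (c * d) v"
  proof (cases "v = a @ b")
    case True
    have eq: "take i v = a \<longleftrightarrow> i = length a" if "i \<le> length v" for i
    proof
      assume "take i v = a"
      then have "length (take i v) = length a" by simp
      then show "i = length a" using that by simp
    qed (use True in simp)
    have "fa_mult (fa_monom a c) (fa_monom b d) v = (\<Sum>i\<le>length v. if i = length a then c * d else 0)"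
      unfolding fa_mult_def fa_monom_def
    proof (intro sum.cong refl)
      fix i assume "i \<in> {..length v}"
      then show "(if take i v = a then c else 0) * (if drop i v = b then d else 0) = (if i = length a then c * d else 0)"
        using eq[of i] True by auto
    qed
    then show ?thesis using True by (simp add: fa_monom_def)
  next
    case False
    have "fa_mult (fa_monom a c) (fa_monom b d) v = (\<Sum>i\<le>length v. 0)"
      unfolding fa_mult_def fa_monom_def using False
    proof (intro sum.cong refl)
      fix i assume "i \<in> {..length v}"
      show "(if take i v = a then c else 0) * (if drop i v = b then d else 0) = 0"
        using append_take_drop_id[of i v] False by auto
    qed
    then show ?thesis using False by (simp add: fa_monom_def)
  qed
qed

lemma rel1_supp: "{w. du_rel1 \<alpha> \<beta> \<gamma> w \<noteq> 0} \<subseteq> {[D,D,U],[D,U,D],[U,D,D],[D]}"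
  by (auto simp: du_rel1_def fa_monom_def)
lemma rel2_supp: "{w. du_rel2 \<alpha> \<beta> \<gamma> w \<noteq> 0} \<subseteq> {[D,U,U],[U,D,U],[U,U,D],[U]}"
  by (auto simp: du_rel2_def fa_monom_def)

lemma rels_carrier: "du_rel1 \<alpha> \<beta> \<gamma> \<in> carrier free_alg" "du_rel2 \<alpha> \<beta> \<gamma> \<in> carrier free_alg"
  by (auto simp: fa_carrier intro: finite_subset[OF rel1_supp] finite_subset[OF rel2_supp])

lemma du_ideal_ideal: "ideal (du_ideal \<alpha> \<beta> \<gamma>) (free_alg :: (gen list \<Rightarrow> 'k::field) ring)"
  unfolding du_ideal_def
  by (rule ring.genideal_ideal[OF free_alg_ring]) (use rels_carrier in auto)

lemma ev_rel1: "ev x y (du_rel1 \<alpha> 0 0) = x * x * y - sc \<alpha> * (x * y * x)"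
proof -
  have "ev x y (du_rel1 \<alpha> 0 0) = (\<Sum>w\<in>{[D,D,U],[D,U,D]}. sc (du_rel1 \<alpha> 0 0 w) * wev x y w)"
    by (rule ev_superset) (auto simp: du_rel1_def fa_monom_def)
  then show ?thesis by (simp add: du_rel1_def fa_monom_def sc_hom gv_def mult.assoc)
qed

lemma ev_rel2: "ev x y (du_rel2 \<alpha> 0 0) = x * y * y - sc \<alpha> * (y * x * y)"
proof -
  have "ev x y (du_rel2 \<alpha> 0 0) = (\<Sum>w\<in>{[D,U,U],[U,D,U]}. sc (du_rel2 \<alpha> 0 0 w) * wev x y w)"
    by (rule ev_superset) (auto simp: du_rel2_def fa_monom_def)
  then show ?thesis by (simp add: du_rel2_def fa_monom_def sc_hom gv_def mult.assoc)
qed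

definition kset where "kset x y = {f \<in> carrier free_alg. ev x y f = 0}"

lemma kset_ideal:
  fixes x y :: "'k::field t2"
  shows "ideal (kset x y) free_alg"
proof (rule idealI[OF free_alg_ring])
  interpret FA: ring free_alg by (rule free_alg_ring)
  show "subgroup (kset x y) (add_monoid free_alg)"
  proof (rule FA.add.subgroupI)
    show "kset x y \<subseteq> carrier free_alg" by (auto simp: kset_def)
    show "kset x y \<noteq> {}" by (auto simp: kset_def fa_carrier ev_def intro!: exI[of _ "\<lambda>w. 0"])
  next
    fix a assume a: "a \<in> kset x y"
    have "ev x y (\<lambda>w. - a w + a w) = ev x y (\<lambda>w. - a w) + ev x y a"
      by (rule ev_add) (use a in \<open>auto simp: kset_def fa_carrier\<close>)
    moreover have "ev x y (\<lambda>w. - a w + a w) = 0" by (simp add: ev_def)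
    moreover have "\<ominus>\<^bsub>free_alg\<^esub> a = (\<lambda>w. - a w)"
    proof -
      have "(\<lambda>w. - a w) \<in> carrier free_alg" "(\<lambda>w. - a w) \<oplus>\<^bsub>free_alg\<^esub> a = \<zero>\<^bsub>free_alg\<^esub>"
        "a \<in> carrier free_alg"
        using a by (auto simp: kset_def fa_carrier fa_add fa_zero)
      then show ?thesis
        using FA.minus_equality by blast
    qed
    ultimately show "\<ominus>\<^bsub>free_alg\<^esub> a \<in> kset x y"
      using a by (auto simp: kset_def fa_carrier)
  next
    fix a b assume "a \<in> kset x y" "b \<in> kset x y"
    then show "a \<oplus>\<^bsub>free_alg\<^esub> b \<in> kset x y"
      by (auto simp: kset_def fa_carrier fa_add ev_add finite_add)
  qed
next
  fix a b :: "gen list \<Rightarrow> 'k" assume "a \<in> kset x y" "b \<in> carrier free_alg"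
  then show "b \<otimes>\<^bsub>free_alg\<^esub> a \<in> kset x y" "a \<otimes>\<^bsub>free_alg\<^esub> b \<in> kset x y"
    by (auto simp: kset_def fa_carrier fa_mult_eq ev_mult finite_mult)
qed

lemma ideal_sub_kset:
  assumes "rel \<alpha> x y"
  shows "du_ideal \<alpha> 0 0 \<subseteq> kset x y"
  unfolding du_ideal_def
proof (rule ring.genideal_minimal[OF free_alg_ring kset_ideal])
  show "{du_rel1 \<alpha> 0 0, du_rel2 \<alpha> 0 0} \<subseteq> kset x y"
    using assms rels_carrier by (auto simp: kset_def ev_rel1 ev_rel2 rel_def)
qed

lemma ev_coset:
  assumes "rel \<alpha> x y" "f \<in> carrier free_alg"
  shows "ev x y ` (du_ideal \<alpha> 0 0 +>\<^bsub>free_alg\<^esub> f) = {ev x y f}"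
proof -
  interpret I: ideal "du_ideal \<alpha> 0 0" free_alg by (rule du_ideal_ideal)
  have sub: "du_ideal \<alpha> 0 0 \<subseteq> kset x y" by (rule ideal_sub_kset[OF assms(1)])
  have "ev x y (i \<oplus>\<^bsub>free_alg\<^esub> f) = ev x y f" if "i \<in> du_ideal \<alpha> 0 0" for i
  proof -
    have "i \<in> kset x y" using sub that by auto
    then show ?thesis using assms(2) by (auto simp: kset_def fa_carrier fa_add ev_add)
  qed
  moreover have "\<zero>\<^bsub>free_alg\<^esub> \<in> du_ideal \<alpha> 0 0" by simp
  moreover have "\<zero>\<^bsub>free_alg\<^esub> \<oplus>\<^bsub>free_alg\<^esub> f \<in> du_ideal \<alpha> 0 0 +>\<^bsub>free_alg\<^esub> f"
    using \<open>\<zero>\<^bsub>free_alg\<^esub> \<in> du_ideal \<alpha> 0 0\<close> by (auto simp: a_r_coset_def')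
  ultimately show ?thesis
    by (auto simp: a_r_coset_def' intro!: image_eqI[where x="\<zero>\<^bsub>free_alg\<^esub> \<oplus>\<^bsub>free_alg\<^esub> f"])
qed



definition cls :: "'k::field \<Rightarrow> (gen list \<Rightarrow> 'k) \<Rightarrow> (gen list \<Rightarrow> 'k) set" where
  "cls \<alpha> f = du_ideal \<alpha> 0 0 +>\<^bsub>free_alg\<^esub> f"

lemma du_ring: "ring (down_up \<alpha> 0 0)"
  unfolding down_up_def by (rule ideal.quotient_is_ring[OF du_ideal_ideal])

lemma cls_carrier: "f \<in> carrier free_alg \<Longrightarrow> cls \<alpha> f \<in> carrier (down_up \<alpha> 0 0)"
  using ring_hom_closed[OF ideal.rcos_ring_hom[OF du_ideal_ideal]]
  by (simp add: cls_def down_up_def)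

lemma cls_mult: "f \<in> carrier free_alg \<Longrightarrow> g \<in> carrier free_alg \<Longrightarrow>
   cls \<alpha> (f \<otimes>\<^bsub>free_alg\<^esub> g) = cls \<alpha> f \<otimes>\<^bsub>down_up \<alpha> 0 0\<^esub> cls \<alpha> g"
  using ring_hom_mult[OF ideal.rcos_ring_hom[OF du_ideal_ideal]]
  by (simp add: cls_def down_up_def)

lemma cls_add: "f \<in> carrier free_alg \<Longrightarrow> g \<in> carrier free_alg \<Longrightarrow>
   cls \<alpha> (f \<oplus>\<^bsub>free_alg\<^esub> g) = cls \<alpha> f \<oplus>\<^bsub>down_up \<alpha> 0 0\<^esub> cls \<alpha> g"
  using ring_hom_add[OF ideal.rcos_ring_hom[OF du_ideal_ideal]]
  by (simp add: cls_def down_up_def)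

lemma cls_surj: "X \<in> carrier (down_up \<alpha> 0 0) \<Longrightarrow> \<exists>f\<in>carrier free_alg. X = cls \<alpha> f"
  by (auto simp: down_up_def FactRing_def A_RCOSETS_def' cls_def)

lemma cls_zero: "r \<in> du_ideal \<alpha> 0 0 \<Longrightarrow> cls \<alpha> r = \<zero>\<^bsub>down_up \<alpha> 0 0\<^esub>"
  unfolding cls_def down_up_def FactRing_def
  by (simp add: ring.a_rcos_zero[OF free_alg_ring du_ideal_ideal])

lemma rels_in_ideal: fixes \<alpha> :: "'k::field" shows "du_rel1 \<alpha> 0 0 \<in> du_ideal \<alpha> 0 0" "du_rel2 \<alpha> 0 0 \<in> du_ideal \<alpha> 0 0"
proof -
  have sub: "{du_rel1 \<alpha> 0 0, du_rel2 \<alpha> 0 0} \<subseteq> carrier free_alg" using rels_carrier by auto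
  show "du_rel1 \<alpha> 0 0 \<in> du_ideal \<alpha> 0 0" "du_rel2 \<alpha> 0 0 \<in> du_ideal \<alpha> 0 0"
    unfolding du_ideal_def using ring.genideal_self[OF free_alg_ring sub] by auto
qed

lemma monom_carrier: "fa_monom w c \<in> carrier free_alg"
  by (simp add: fa_carrier fa_monom_finite)

lemma chi_zero:
  fixes \<chi> :: "(gen list \<Rightarrow> 'k::field) set \<Rightarrow> 'k t2"
  assumes ha: "\<And>X Y. X \<in> carrier (down_up \<alpha> 0 0) \<Longrightarrow> Y \<in> carrier (down_up \<alpha> 0 0) \<Longrightarrow>
      \<chi> (X \<oplus>\<^bsub>down_up \<alpha> 0 0\<^esub> Y) = \<chi> X + \<chi> Y"
  shows "\<chi> (\<zero>\<^bsub>down_up \<alpha> 0 0\<^esub>) = 0"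
proof -
  interpret Q: ring "down_up \<alpha> 0 0" by (rule du_ring)
  have "\<chi> (\<zero>\<^bsub>down_up \<alpha> 0 0\<^esub> \<oplus>\<^bsub>down_up \<alpha> 0 0\<^esub> \<zero>\<^bsub>down_up \<alpha> 0 0\<^esub>) = \<chi> \<zero>\<^bsub>down_up \<alpha> 0 0\<^esub> + \<chi> \<zero>\<^bsub>down_up \<alpha> 0 0\<^esub>"
    by (rule ha) simp_all
  then show ?thesis by simp
qed

lemma chi_eval:
  fixes \<chi> :: "(gen list \<Rightarrow> 'k::field) set \<Rightarrow> 'k t2"
  assumes hm: "\<And>X Y. X \<in> carrier (down_up \<alpha> 0 0) \<Longrightarrow> Y \<in> carrier (down_up \<alpha> 0 0) \<Longrightarrow>
      \<chi> (X \<otimes>\<^bsub>down_up \<alpha> 0 0\<^esub> Y) = \<chi> X * \<chi> Y"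
  and ha: "\<And>X Y. X \<in> carrier (down_up \<alpha> 0 0) \<Longrightarrow> Y \<in> carrier (down_up \<alpha> 0 0) \<Longrightarrow>
      \<chi> (X \<oplus>\<^bsub>down_up \<alpha> 0 0\<^esub> Y) = \<chi> X + \<chi> Y"
  and hs: "\<And>c. \<chi> (du_scalar \<alpha> 0 0 c) = sc c"
  and f: "f \<in> carrier free_alg"
  shows "\<chi> (cls \<alpha> f) = ev (\<chi> (cls \<alpha> (fa_monom [D] 1))) (\<chi> (cls \<alpha> (fa_monom [U] 1))) f"
proof -
  define X where "X = \<chi> (cls \<alpha> (fa_monom [D] 1))"
  define Y where "Y = \<chi> (cls \<alpha> (fa_monom [U] 1))"
  have mon: "\<chi> (cls \<alpha> (fa_monom w c)) = sc c * wev X Y w" for w c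
  proof (induction w arbitrary: c)
    case Nil
    then show ?case using hs[of c] by (simp add: du_scalar_def cls_def)
  next
    case (Cons g w)
    have "fa_monom (g # w) c = fa_monom [g] 1 \<otimes>\<^bsub>free_alg\<^esub> fa_monom w c"
      by (simp add: fa_mult_eq monom_mult)
    then have "\<chi> (cls \<alpha> (fa_monom (g # w) c)) = \<chi> (cls \<alpha> (fa_monom [g] 1)) * \<chi> (cls \<alpha> (fa_monom w c))"
      by (simp add: cls_mult monom_carrier hm cls_carrier)
    also have "\<dots> = gv X Y g * (sc c * wev X Y w)"
      using Cons by (cases g) (simp_all add: gv_def X_def Y_def)
    also have "\<dots> = sc c * wev X Y (g # w)"
      by (metis mult.assoc sc_central wev_simps(2))
    finally show ?case .
  qed
  have gen: "\<chi> (cls \<alpha> h) = (\<Sum>w\<in>W. sc (h w) * wev X Y w)"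
    if "finite W" "{w. h w \<noteq> 0} \<subseteq> W" for W h
    using that
  proof (induction W arbitrary: h rule: finite_induct)
    case empty
    then have "h = \<zero>\<^bsub>free_alg\<^esub>" by (auto simp: fa_zero)
    then have "cls \<alpha> h = \<zero>\<^bsub>down_up \<alpha> 0 0\<^esub>"
      using cls_zero by (metis additive_subgroup.zero_closed du_ideal_ideal ideal.axioms(1))
    then show ?case using chi_zero[OF ha] by simp
  next
    case (insert w W)
    define h' where "h' = h(w := 0)"
    have hc: "h' \<in> carrier free_alg" using insert by (auto simp: fa_carrier h'_def intro: finite_subset)
    have eqh: "h = h' \<oplus>\<^bsub>free_alg\<^esub> fa_monom w (h w)"
      by (auto simp: fa_add h'_def fa_monom_def)
    have "cls \<alpha> h = cls \<alpha> h' \<oplus>\<^bsub>down_up \<alpha> 0 0\<^esub> cls \<alpha> (fa_monom w (h w))"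
      using cls_add[OF hc monom_carrier] eqh by metis
    then have "\<chi> (cls \<alpha> h) = \<chi> (cls \<alpha> h' \<oplus>\<^bsub>down_up \<alpha> 0 0\<^esub> cls \<alpha> (fa_monom w (h w)))"
      by simp
    also have "\<dots> = \<chi> (cls \<alpha> h') + \<chi> (cls \<alpha> (fa_monom w (h w)))"
      by (rule ha) (simp_all add: cls_carrier hc monom_carrier)
    finally have "\<chi> (cls \<alpha> h) = \<chi> (cls \<alpha> h') + sc (h w) * wev X Y w" by (simp add: mon)
    also have "\<chi> (cls \<alpha> h') = (\<Sum>v\<in>W. sc (h' v) * wev X Y v)"
      by (rule insert.IH) (use insert in \<open>auto simp: h'_def\<close>)
    also have "\<dots> = (\<Sum>v\<in>W. sc (h v) * wev X Y v)"
      using insert by (auto simp: h'_def intro!: sum.cong)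
    finally show ?case using insert by (simp add: add.commute)
  qed
  show ?thesis
    using gen[of "{w. f w \<noteq> 0}" f] f by (simp add: fa_carrier ev_def X_def Y_def)
qed

lemma ev_D: "ev x y (fa_monom [D] 1) = x" and ev_U: "ev x y (fa_monom [U] 1) = y"
  by (simp_all add: ev_monom sc_hom gv_def)

lemma transfer:
  fixes \<phi> :: "(gen list \<Rightarrow> 'k::field) set \<Rightarrow> (gen list \<Rightarrow> 'k) set"
  assumes hom: "\<phi> \<in> ring_hom (down_up \<alpha> 0 0) (down_up \<alpha>' 0 0)"
  and sc: "\<And>c. \<phi> (du_scalar \<alpha> 0 0 c) = du_scalar \<alpha>' 0 0 c"
  and P: "P \<in> carrier free_alg" "\<phi> (cls \<alpha> (fa_monom [D] 1)) = cls \<alpha>' P"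
  and Q: "Q \<in> carrier free_alg" "\<phi> (cls \<alpha> (fa_monom [U] 1)) = cls \<alpha>' Q"
  and r: "rel \<alpha>' x y"
  shows "rel \<alpha> (ev x y P) (ev x y Q)"
    and "\<And>f g. f \<in> carrier free_alg \<Longrightarrow> g \<in> carrier free_alg \<Longrightarrow> \<phi> (cls \<alpha> f) = cls \<alpha>' g \<Longrightarrow>
           ev x y g = ev (ev x y P) (ev x y Q) f"
proof -
  define \<psi> where "\<psi> X = the_elem (ev x y ` X)" for X
  have psi: "\<psi> (cls \<alpha>' h) = ev x y h" if "h \<in> carrier free_alg" for h
    unfolding \<psi>_def cls_def using ev_coset[OF r that] by simp
  define \<chi> where "\<chi> = \<psi> \<circ> \<phi>"
  have chi_cls: "\<chi> X = ev x y h" if "X \<in> carrier (down_up \<alpha> 0 0)" "h \<in> carrier free_alg" "\<phi> X = cls \<alpha>' h" for X h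
    using that psi by (simp add: \<chi>_def)
  have rep: "\<exists>h\<in>carrier free_alg. \<phi> X = cls \<alpha>' h" if "X \<in> carrier (down_up \<alpha> 0 0)" for X
    using cls_surj ring_hom_closed[OF hom that] by blast
  have hm: "\<chi> (X \<otimes>\<^bsub>down_up \<alpha> 0 0\<^esub> Y) = \<chi> X * \<chi> Y"
    if hX: "X \<in> carrier (down_up \<alpha> 0 0)" and hY: "Y \<in> carrier (down_up \<alpha> 0 0)" for X Y
  proof -
    obtain h1 h2 where h: "h1 \<in> carrier free_alg" "\<phi> X = cls \<alpha>' h1" "h2 \<in> carrier free_alg" "\<phi> Y = cls \<alpha>' h2"
      using rep[OF hX] rep[OF hY] by blast
    have "\<phi> (X \<otimes>\<^bsub>down_up \<alpha> 0 0\<^esub> Y) = cls \<alpha>' (h1 \<otimes>\<^bsub>free_alg\<^esub> h2)"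
      using ring_hom_mult[OF hom that] h by (simp add: cls_mult)
    then have "\<chi> (X \<otimes>\<^bsub>down_up \<alpha> 0 0\<^esub> Y) = ev x y (h1 \<otimes>\<^bsub>free_alg\<^esub> h2)"
      using h that by (intro chi_cls) (simp_all add: ring.ring_simprules[OF du_ring] ring.ring_simprules[OF free_alg_ring])
    also have "\<dots> = ev x y h1 * ev x y h2"
      using h by (simp add: fa_mult_eq ev_mult fa_carrier)
    finally show ?thesis using chi_cls h that by simp
  qed
  have ha: "\<chi> (X \<oplus>\<^bsub>down_up \<alpha> 0 0\<^esub> Y) = \<chi> X + \<chi> Y"
    if hX: "X \<in> carrier (down_up \<alpha> 0 0)" and hY: "Y \<in> carrier (down_up \<alpha> 0 0)" for X Y
  proof -
    obtain h1 h2 where h: "h1 \<in> carrier free_alg" "\<phi> X = cls \<alpha>' h1" "h2 \<in> carrier free_alg" "\<phi> Y = cls \<alpha>' h2"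
      using rep[OF hX] rep[OF hY] by blast
    have "\<phi> (X \<oplus>\<^bsub>down_up \<alpha> 0 0\<^esub> Y) = cls \<alpha>' (h1 \<oplus>\<^bsub>free_alg\<^esub> h2)"
      using ring_hom_add[OF hom that] h by (simp add: cls_add)
    then have "\<chi> (X \<oplus>\<^bsub>down_up \<alpha> 0 0\<^esub> Y) = ev x y (h1 \<oplus>\<^bsub>free_alg\<^esub> h2)"
      using h that by (intro chi_cls) (simp_all add: ring.ring_simprules[OF du_ring] ring.ring_simprules[OF free_alg_ring])
    also have "\<dots> = ev x y h1 + ev x y h2"
      using h by (simp add: fa_add ev_add fa_carrier)
    finally show ?thesis using chi_cls h that by simp
  qed
  have hs: "\<chi> (du_scalar \<alpha> 0 0 c) = sc c" for c
  proof -
    have "\<chi> (du_scalar \<alpha> 0 0 c) = ev x y (fa_monom [] c)"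
      using sc[of c] by (intro chi_cls) (simp_all add: du_scalar_def cls_def[symmetric] cls_carrier monom_carrier)
    then show ?thesis by (simp add: ev_monom)
  qed
  have XD: "\<chi> (cls \<alpha> (fa_monom [D] 1)) = ev x y P"
    using P by (intro chi_cls) (simp_all add: cls_carrier monom_carrier)
  have YU: "\<chi> (cls \<alpha> (fa_monom [U] 1)) = ev x y Q"
    using Q by (intro chi_cls) (simp_all add: cls_carrier monom_carrier)
  have main: "\<chi> (cls \<alpha> f) = ev (ev x y P) (ev x y Q) f" if "f \<in> carrier free_alg" for f
    using chi_eval[OF hm ha hs that] XD YU by simp
  show "ev x y g = ev (ev x y P) (ev x y Q) f"
    if "f \<in> carrier free_alg" "g \<in> carrier free_alg" "\<phi> (cls \<alpha> f) = cls \<alpha>' g" for f g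
    using main[OF that(1)] chi_cls[OF cls_carrier[OF that(1)] that(2,3)] by simp
  have z: "\<chi> (cls \<alpha> (du_rel1 \<alpha> 0 0)) = 0" "\<chi> (cls \<alpha> (du_rel2 \<alpha> 0 0)) = 0"
  proof -
    have cz: "\<chi> (\<zero>\<^bsub>down_up \<alpha> 0 0\<^esub>) = 0"
      by (rule chi_zero) (rule ha)
    show "\<chi> (cls \<alpha> (du_rel1 \<alpha> 0 0)) = 0"
      using cls_zero[OF rels_in_ideal(1), of \<alpha>] cz by simp
    show "\<chi> (cls \<alpha> (du_rel2 \<alpha> 0 0)) = 0"
      using cls_zero[OF rels_in_ideal(2), of \<alpha>] cz by simp
  qed
  show "rel \<alpha> (ev x y P) (ev x y Q)"
    using z main[OF rels_carrier(1)] main[OF rels_carrier(2)]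
    by (simp add: ev_rel1 ev_rel2 rel_def)
qed

definition Equiv :: "'k::field \<Rightarrow> 'k \<Rightarrow> (gen list \<Rightarrow> 'k) \<Rightarrow> (gen list \<Rightarrow> 'k) \<Rightarrow> (gen list \<Rightarrow> 'k) \<Rightarrow> (gen list \<Rightarrow> 'k) \<Rightarrow> bool" where
  "Equiv \<beta> \<gamma> P Q R S \<longleftrightarrow> (\<forall>x y. rel \<beta> x y \<longrightarrow> rel \<gamma> (ev x y P) (ev x y Q) \<and>
      ev (ev x y P) (ev x y Q) R = x \<and> ev (ev x y P) (ev x y Q) S = y)"

lemma iso_equiv:
  fixes \<alpha> \<alpha>' :: "'k::field"
  assumes "down_up_iso \<alpha> 0 0 \<alpha>' 0 0"
  shows "\<exists>P Q R S. Equiv \<alpha>' \<alpha> P Q R S \<and> Equiv \<alpha> \<alpha>' R S P Q"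
proof -
  obtain \<phi> where iso: "\<phi> \<in> ring_iso (down_up \<alpha> 0 0) (down_up \<alpha>' 0 0)"
    and sc: "\<And>c. \<phi> (du_scalar \<alpha> 0 0 c) = du_scalar \<alpha>' 0 0 c"
    using assms unfolding down_up_iso_def by blast
  define \<phi>' where "\<phi>' = inv_into (carrier (down_up \<alpha> 0 0)) \<phi>"
  have iso': "\<phi>' \<in> ring_iso (down_up \<alpha>' 0 0) (down_up \<alpha> 0 0)"
    unfolding \<phi>'_def by (rule ring_iso_set_sym[OF du_ring iso])
  have hom: "\<phi> \<in> ring_hom (down_up \<alpha> 0 0) (down_up \<alpha>' 0 0)" using iso by (simp add: ring_iso_def)
  have hom': "\<phi>' \<in> ring_hom (down_up \<alpha>' 0 0) (down_up \<alpha> 0 0)" using iso' by (simp add: ring_iso_def)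
  have bij: "bij_betw \<phi> (carrier (down_up \<alpha> 0 0)) (carrier (down_up \<alpha>' 0 0))"
    using iso by (simp add: ring_iso_def)
  have inv1: "\<phi>' (\<phi> X) = X" if "X \<in> carrier (down_up \<alpha> 0 0)" for X
    using bij that unfolding \<phi>'_def by (simp add: bij_betw_def inv_into_f_f)
  have inv2: "\<phi> (\<phi>' Y) = Y" if "Y \<in> carrier (down_up \<alpha>' 0 0)" for Y
    using bij that unfolding \<phi>'_def by (simp add: bij_betw_def f_inv_into_f)
  have sc': "\<phi>' (du_scalar \<alpha>' 0 0 c) = du_scalar \<alpha> 0 0 c" for c
  proof -
    have "du_scalar \<alpha> 0 0 c \<in> carrier (down_up \<alpha> 0 0)"
      using cls_carrier[OF monom_carrier] by (simp add: du_scalar_def cls_def)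
    then show ?thesis using inv1[of "du_scalar \<alpha> 0 0 c"] sc[of c] by simp
  qed
  obtain P where P: "P \<in> carrier free_alg" "\<phi> (cls \<alpha> (fa_monom [D] 1)) = cls \<alpha>' P"
    using cls_surj ring_hom_closed[OF hom cls_carrier[OF monom_carrier]] by blast
  obtain Q where Q: "Q \<in> carrier free_alg" "\<phi> (cls \<alpha> (fa_monom [U] 1)) = cls \<alpha>' Q"
    using cls_surj ring_hom_closed[OF hom cls_carrier[OF monom_carrier]] by blast
  obtain R where R: "R \<in> carrier free_alg" "\<phi>' (cls \<alpha>' (fa_monom [D] 1)) = cls \<alpha> R"
    using cls_surj ring_hom_closed[OF hom' cls_carrier[OF monom_carrier]] by blast
  obtain S where S: "S \<in> carrier free_alg" "\<phi>' (cls \<alpha>' (fa_monom [U] 1)) = cls \<alpha> S"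
    using cls_surj ring_hom_closed[OF hom' cls_carrier[OF monom_carrier]] by blast
  have "Equiv \<alpha>' \<alpha> P Q R S"
    unfolding Equiv_def
  proof (intro allI impI conjI)
    fix x y assume r: "rel \<alpha>' x y"
    note T = transfer[OF hom sc P Q r]
    show "rel \<alpha> (ev x y P) (ev x y Q)" by (rule T(1))
    have "\<phi> (cls \<alpha> R) = cls \<alpha>' (fa_monom [D] 1)"
      using inv2[OF cls_carrier[OF monom_carrier]] R by metis
    from T(2)[OF R(1) monom_carrier this] show "ev (ev x y P) (ev x y Q) R = x" by (simp add: ev_D)
    have "\<phi> (cls \<alpha> S) = cls \<alpha>' (fa_monom [U] 1)"
      using inv2[OF cls_carrier[OF monom_carrier]] S by metis
    from T(2)[OF S(1) monom_carrier this] show "ev (ev x y P) (ev x y Q) S = y" by (simp add: ev_U)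
  qed
  moreover have "Equiv \<alpha> \<alpha>' R S P Q"
    unfolding Equiv_def
  proof (intro allI impI conjI)
    fix x y assume r: "rel \<alpha> x y"
    note T = transfer[OF hom' sc' R S r]
    show "rel \<alpha>' (ev x y R) (ev x y S)" by (rule T(1))
    have "\<phi>' (cls \<alpha>' P) = cls \<alpha> (fa_monom [D] 1)"
      using inv1[OF cls_carrier[OF monom_carrier]] P by metis
    from T(2)[OF P(1) monom_carrier this] show "ev (ev x y R) (ev x y S) P = x" by (simp add: ev_D)
    have "\<phi>' (cls \<alpha>' Q) = cls \<alpha> (fa_monom [U] 1)"
      using inv1[OF cls_carrier[OF monom_carrier]] Q by metis
    from T(2)[OF Q(1) monom_carrier this] show "ev (ev x y R) (ev x y S) Q = y" by (simp add: ev_U)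
  qed
  ultimately show ?thesis by blast
qed


definition cev :: "'k::field \<Rightarrow> 'k \<Rightarrow> (gen list \<Rightarrow> 'k) \<Rightarrow> 'k" where
  "cev a b f = (\<Sum>w\<in>{w. f w \<noteq> 0}. f w * wev a b w)"

lemma d_wev: "d1 (wev x y w) = wev (d1 x) (d1 y) w" "d2 (wev x y w) = wev (d2 x) (d2 y) w"
  by (induction w) (auto simp: gv_def split: gen.splits)
lemma d_ev: "d1 (ev x y f) = cev (d1 x) (d1 y) f" "d2 (ev x y f) = cev (d2 x) (d2 y) f"
  by (simp_all add: ev_def cev_def d_wev)
lemma of2_wev:
  "of2 (wev (T2 a s a') (T2 b t b') w) =
     s * of2 (wev (T2 a 1 a') (T2 b 0 b') w) + t * of2 (wev (T2 a 0 a') (T2 b 1 b') w)"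
proof (induction w)
  case Nil then show ?case by simp
next
  case (Cons g w)
  show ?case
  proof (cases g)
    case D
    then show ?thesis using Cons by (simp add: gv_def d_wev distrib_left mult.left_commute)
  next
    case U
    then show ?thesis using Cons by (simp add: gv_def d_wev distrib_left mult.left_commute)
  qed
qed
definition lo1 where "lo1 a a' b b' f = of2 (ev (T2 a 1 a') (T2 b 0 b') f)"
definition lo2 where "lo2 a a' b b' f = of2 (ev (T2 a 0 a') (T2 b 1 b') f)"

lemma ev_T2:
  "ev (T2 a s a') (T2 b t b') f =
     T2 (cev a b f) (s * lo1 a a' b b' f + t * lo2 a a' b b' f) (cev a' b' f)"
proof -
  have "of2 (ev (T2 a s a') (T2 b t b') f) = s * lo1 a a' b b' f + t * lo2 a a' b b' f"
    unfolding lo1_def lo2_def ev_def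
    by (simp add: of2_wev[of a s a' b t b'] sum_distrib_left sum.distrib distrib_left mult.left_commute)
  then show ?thesis by (simp add: t2_eq d_ev)
qed
lemma rel_T2:
  "rel \<beta> (T2 a s a') (T2 b t b') \<longleftrightarrow>
    (a*a*b = \<beta>*(a*b*a) \<and> a*a*t + (a*s + s*a')*b' = \<beta>*(a*b*s + (a*t + s*b')*a') \<and> a'*a'*b' = \<beta>*(a'*b'*a')) \<and>
    (a*b*b = \<beta>*(b*a*b) \<and> a*b*t + (a*t + s*b')*b' = \<beta>*(b*a*t + (b*s + t*a')*b') \<and> a'*b'*b' = \<beta>*(b'*a'*b'))"
  by (simp add: rel_def t2_eq)

lemma lin2:
  fixes l11 l12 l21 l22 m11 m12 m21 m22 :: "'k::field"
  assumes h1: "l11 * m11 + l21 * m12 = 1" and h2: "l11 * m21 + l21 * m22 = 0"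
     and h3: "l12 * m11 + l22 * m12 = 0" and h4: "l12 * m21 + l22 * m22 = 1"
  shows "l11 * m11 + l12 * m21 = 1 \<and> l11 * m12 + l12 * m22 = 0 \<and> l21 * m11 + l22 * m21 = 0 \<and> l21 * m12 + l22 * m22 = 1"
proof -
  define d where "d = l11*l22 - l12*l21"
  have "(m11*m22 - m12*m21) * d = (l11 * m11 + l21 * m12) * (l12 * m21 + l22 * m22) - (l12 * m11 + l22 * m12) * (l11 * m21 + l21 * m22)"
    unfolding d_def by (simp add: algebra_simps)
  then have "(m11*m22 - m12*m21) * d = 1" using h1 h2 h3 h4 by simp
  then have d: "d \<noteq> 0" by auto
  have e1: "m11 * d = l22" 
  proof -
    have "m11 * d = l22 * (l11 * m11 + l21 * m12) - l21 * (l12 * m11 + l22 * m12)"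
      unfolding d_def by (simp add: algebra_simps)
    then show ?thesis using h1 h3 by simp
  qed
  have e2: "m12 * d = - l12"
  proof -
    have "m12 * d = l11 * (l12 * m11 + l22 * m12) - l12 * (l11 * m11 + l21 * m12)"
      unfolding d_def by (simp add: algebra_simps)
    then show ?thesis using h1 h3 by simp
  qed
  have e3: "m21 * d = - l21"
  proof -
    have "m21 * d = l22 * (l11 * m21 + l21 * m22) - l21 * (l12 * m21 + l22 * m22)"
      unfolding d_def by (simp add: algebra_simps)
    then show ?thesis using h2 h4 by simp
  qed
  have e4: "m22 * d = l11"
  proof -
    have "m22 * d = l11 * (l12 * m21 + l22 * m22) - l12 * (l11 * m21 + l21 * m22)"
      unfolding d_def by (simp add: algebra_simps)
    then show ?thesis using h2 h4 by simp
  qed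
  have "(l11 * m11 + l12 * m21) * d = l11 * (m11 * d) + l12 * (m21 * d)"
    "(l11 * m12 + l12 * m22) * d = l11 * (m12 * d) + l12 * (m22 * d)"
    "(l21 * m11 + l22 * m21) * d = l21 * (m11 * d) + l22 * (m21 * d)"
    "(l21 * m12 + l22 * m22) * d = l21 * (m12 * d) + l22 * (m22 * d)"
    by (simp_all add: algebra_simps)
  then have "(l11 * m11 + l12 * m21) * d = 1 * d" "(l11 * m12 + l12 * m22) * d = 0 * d"
    "(l21 * m11 + l22 * m21) * d = 0 * d" "(l21 * m12 + l22 * m22) * d = 1 * d"
    unfolding e1 e2 e3 e4 by (simp_all add: d_def algebra_simps)
  then show ?thesis using d by (metis mult_right_cancel)
qed

definition Full where "Full \<beta> a a' b b' \<longleftrightarrow> (\<forall>s t. rel \<beta> (T2 a s a') (T2 b t b'))"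

lemma full_transfer:
  assumes E: "Equiv \<beta> \<gamma> P Q R S" and F: "Full \<beta> a a' b b'"
  shows "Full \<gamma> (cev a b P) (cev a' b' P) (cev a b Q) (cev a' b' Q)"
proof -
  define p where "p = cev a b P"
  define p' where "p' = cev a' b' P"
  define q where "q = cev a b Q"
  define q' where "q' = cev a' b' Q"
  define l11 where "l11 = lo1 a a' b b' P"
  define l12 where "l12 = lo2 a a' b b' P"
  define l21 where "l21 = lo1 a a' b b' Q"
  define l22 where "l22 = lo2 a a' b b' Q"
  define m11 where "m11 = lo1 p p' q q' R"
  define m12 where "m12 = lo2 p p' q q' R"
  define m21 where "m21 = lo1 p p' q q' S"
  define m22 where "m22 = lo2 p p' q q' S"
  have step: "rel \<gamma> (T2 p (s*l11 + t*l12) p') (T2 q (s*l21 + t*l22) q') \<and>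
     (s*l11 + t*l12) * m11 + (s*l21 + t*l22) * m12 = s \<and>
     (s*l11 + t*l12) * m21 + (s*l21 + t*l22) * m22 = t" for s t
  proof -
    have r: "rel \<beta> (T2 a s a') (T2 b t b')" using F by (simp add: Full_def)
    from E[unfolded Equiv_def, rule_format, OF r] show ?thesis
      by (simp add: ev_T2 p_def p'_def q_def q'_def l11_def l12_def l21_def l22_def
          m11_def m12_def m21_def m22_def)
  qed
  have e1: "l11 * m11 + l21 * m12 = 1" "l11 * m21 + l21 * m22 = 0"
    using step[of 1 0] by simp_all
  have e2: "l12 * m11 + l22 * m12 = 0" "l12 * m21 + l22 * m22 = 1"
    using step[of 0 1] by simp_all
  show ?thesis
    unfolding Full_def p_def[symmetric] p'_def[symmetric] q_def[symmetric] q'_def[symmetric]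
  proof (intro allI)
    fix u v
    define s where "s = u * m11 + v * m12"
    define t where "t = u * m21 + v * m22"
    have L: "l11 * m11 + l12 * m21 = 1 \<and> l11 * m12 + l12 * m22 = 0 \<and> l21 * m11 + l22 * m21 = 0 \<and> l21 * m12 + l22 * m22 = 1"
      using lin2[OF e1 e2] .
    have "s*l11 + t*l12 = u * (l11 * m11 + l12 * m21) + v * (l11 * m12 + l12 * m22)"
      "s*l21 + t*l22 = u * (l21 * m11 + l22 * m21) + v * (l21 * m12 + l22 * m22)"
      unfolding s_def t_def by (simp_all add: algebra_simps)
    then have "s*l11 + t*l12 = u \<and> s*l21 + t*l22 = v" using L by simp
    then show "rel \<gamma> (T2 p u p') (T2 q v q')" using step[of s t] by simp
  qed
qed

lemma rel_diag: "rel \<beta> (T2 a s a') (T2 b t b') \<Longrightarrow> rel \<beta> (T2 a 0 a') (T2 b 0 b')"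
  by (simp add: rel_T2)

lemma equiv_back:
  assumes "Equiv \<beta> \<gamma> P Q R S" "rel \<beta> (T2 a 0 a') (T2 b 0 b')"
  shows "cev (cev a b P) (cev a b Q) R = a" "cev (cev a b P) (cev a b Q) S = b"
    "rel \<gamma> (T2 (cev a b P) 0 (cev a' b' P)) (T2 (cev a b Q) 0 (cev a' b' Q))"
proof -
  from assms(1)[unfolded Equiv_def, rule_format, OF assms(2)]
  have "rel \<gamma> (ev (T2 a 0 a') (T2 b 0 b') P) (ev (T2 a 0 a') (T2 b 0 b') Q)"
    "ev (ev (T2 a 0 a') (T2 b 0 b') P) (ev (T2 a 0 a') (T2 b 0 b') Q) R = T2 a 0 a'"
    "ev (ev (T2 a 0 a') (T2 b 0 b') P) (ev (T2 a 0 a') (T2 b 0 b') Q) S = T2 b 0 b'"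
    by auto
  then show "cev (cev a b P) (cev a b Q) R = a" "cev (cev a b P) (cev a b Q) S = b"
    "rel \<gamma> (T2 (cev a b P) 0 (cev a' b' P)) (T2 (cev a b Q) 0 (cev a' b' Q))"
    by (auto simp: ev_T2)
qed

lemma partA:
  fixes \<gamma> :: "'k::field"
  assumes E1: "Equiv 1 \<gamma> R S P Q" and E2: "Equiv \<gamma> 1 P Q R S" and g: "\<gamma> \<noteq> 1"
  shows False
proof -
  have r: "rel \<gamma> (T2 1 0 1) (T2 0 0 0)" by (simp add: rel_T2)
  define p where "p = cev 1 0 P"
  define q where "q = cev 1 0 Q"
  note B = equiv_back[OF E2 r]
  have full: "Full 1 p p q q"
    using B(3) unfolding Full_def p_def q_def by (simp add: rel_T2 algebra_simps)
  from full_transfer[OF E1 full] B(1,2)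
  have "Full \<gamma> 1 1 0 0" by (simp add: p_def q_def)
  then have "rel \<gamma> (T2 1 0 1) (T2 0 1 0)" by (simp add: Full_def)
  then show False using g by (simp add: rel_T2)
qed

lemma sq_zero: "x * x = \<gamma> * (x * x) \<Longrightarrow> \<gamma> \<noteq> 1 \<Longrightarrow> (x::'k::field) = 0"
proof -
  assume "x * x = \<gamma> * (x * x)" "\<gamma> \<noteq> 1"
  then have "(1 - \<gamma>) * (x * x) = 0" by (simp add: algebra_simps)
  then show "x = 0" using \<open>\<gamma> \<noteq> 1\<close> by simp
qed

lemma wev_b0: "wev a 0 w = (if U \<in> set w then 0 else (a::'k::comm_ring_1) ^ length w)"
  by (induction w) (auto simp: gv_def split: gen.splits)

definition cpoly :: "(gen list \<Rightarrow> 'k::field) \<Rightarrow> 'k poly" where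
  "cpoly P = (\<Sum>w\<in>{w. P w \<noteq> 0}. monom (P w * (if U \<in> set w then 0 else 1)) (length w))"

lemma poly_cpoly: "poly (cpoly P) a = cev a 0 P"
  unfolding cpoly_def cev_def by (simp add: poly_sum poly_monom wev_b0) (auto intro!: sum.cong)

lemma core:
  fixes \<beta> \<gamma> :: "'k::field_char_0"
  assumes E: "Equiv \<beta> \<gamma> P Q R S" and g: "\<gamma> \<noteq> 1" and b: "\<beta> \<noteq> 0"
  shows "\<beta> = \<gamma>"
proof -
  define f where "f a = cev a 0 P" for a
  define qq where "qq a = cev a 0 Q" for a
  define g where "g a = cev a 0 R" for a
  have F00: "Full \<beta> 0 0 0 0" by (simp add: Full_def rel_T2)
  note T0 = full_transfer[OF E F00]
  have "rel \<gamma> (T2 (cev 0 0 P) 0 (cev 0 0 P)) (T2 (cev 0 0 Q) 1 (cev 0 0 Q))"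
    using T0 by (simp add: Full_def)
  then have p0: "cev 0 0 P = 0" using g by (intro sq_zero[of _ \<gamma>]) (simp_all add: rel_T2)
  have "rel \<gamma> (T2 (cev 0 0 P) 1 (cev 0 0 P)) (T2 (cev 0 0 Q) 0 (cev 0 0 Q))"
    using T0 by (simp add: Full_def)
  then have q0: "cev 0 0 Q = 0" using g by (intro sq_zero[of _ \<gamma>]) (simp_all add: rel_T2)
  have r00: "rel \<beta> (T2 0 0 0) (T2 0 0 0)" by (simp add: rel_T2)
  have g0: "g 0 = 0" using equiv_back(1)[OF E r00] p0 q0 by (simp add: g_def)
  have qa: "qq a = 0" if "a \<noteq> 0" for a
  proof -
    have "Full \<beta> 0 a 0 0" by (simp add: Full_def rel_T2)
    from full_transfer[OF E this] p0 q0
    have "Full \<gamma> 0 (f a) 0 (qq a)" by (simp add: f_def qq_def)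
    then have "rel \<gamma> (T2 0 1 (f a)) (T2 0 0 (qq a))" by (simp add: Full_def)
    then show ?thesis by (simp add: rel_T2)
  qed
  have gf: "g (f a) = a" for a
  proof (cases "a = 0")
    case True then show ?thesis using g0 p0 by (simp add: f_def)
  next
    case False
    have "rel \<beta> (T2 a 0 a) (T2 0 0 0)" by (simp add: rel_T2)
    from equiv_back(1)[OF E this] qa[OF False] show ?thesis by (simp add: f_def g_def qq_def)
  qed
  have fnz: "f a \<noteq> 0" if "a \<noteq> 0" for a
    using gf[of a] g0 that by auto
  have fscale: "f (\<beta> * a) = \<gamma> * f a" for a
  proof (cases "a = 0")
    case True then show ?thesis using p0 by (simp add: f_def)
  next
    case False
    then have ba: "\<beta> * a \<noteq> 0" using b by simp
    have "Full \<beta> (\<beta> * a) a 0 0" by (simp add: Full_def rel_T2 algebra_simps)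
    from full_transfer[OF E this] qa[OF ba] qa[OF False]
    have "Full \<gamma> (f (\<beta> * a)) (f a) 0 0" by (simp add: f_def qq_def)
    then have "rel \<gamma> (T2 (f (\<beta> * a)) 0 (f a)) (T2 0 1 0)" by (simp add: Full_def)
    then have "f (\<beta> * a) * f (\<beta> * a) = f (\<beta> * a) * (\<gamma> * f a)" by (simp add: rel_T2 algebra_simps)
    then show ?thesis using fnz[OF ba] by simp
  qed
  define fp where "fp = cpoly P"
  define gp where "gp = cpoly R"
  have pf: "poly fp a = f a" for a by (simp add: fp_def f_def poly_cpoly)
  have pg: "poly gp a = g a" for a by (simp add: gp_def g_def poly_cpoly)
  have "poly (pcompose gp fp) = poly [:0, 1:]"
    by (rule ext) (simp add: poly_pcompose pf pg gf)
  then have "pcompose gp fp = [:0, 1:]" by (simp add: poly_eq_poly_eq_iff)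
  then have "degree gp * degree fp = 1" using degree_pcompose[of gp fp] by simp
  then have df: "degree fp = 1" by simp
  have "poly (pcompose fp [:0, \<beta>:]) = poly (smult \<gamma> fp)"
    using fscale by (intro ext) (simp add: poly_pcompose pf mult.commute)
  then have "pcompose fp [:0, \<beta>:] = smult \<gamma> fp" by (simp add: poly_eq_poly_eq_iff)
  then have "coeff (pcompose fp [:0, \<beta>:]) 1 = coeff (smult \<gamma> fp) 1" by simp
  then have "\<beta> * coeff fp 1 = \<gamma> * coeff fp 1" by (simp add: coeff_pcompose_linear)
  moreover have "coeff fp 1 \<noteq> 0"
    using df leading_coeff_0_iff[of fp] by (metis one_neq_zero degree_0)
  ultimately show ?thesis by simp
qed


theorem proposition1:
  fixes \<alpha> \<alpha>' :: "'k::field_char_0"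
  assumes "alg_closed TYPE('k)"
  shows "down_up_iso \<alpha> 0 0 \<alpha>' 0 0 \<longleftrightarrow> \<alpha> = \<alpha>'"
proof
  assume iso: "down_up_iso \<alpha> 0 0 \<alpha>' 0 0"
  obtain P Q R S where E1: "Equiv \<alpha>' \<alpha> P Q R S" and E2: "Equiv \<alpha> \<alpha>' R S P Q"
    using iso_equiv[OF iso] by blast
  show "\<alpha> = \<alpha>'"
  proof (cases "\<alpha> = 1")
    case True
    show ?thesis
    proof (rule ccontr)
      assume "\<alpha> \<noteq> \<alpha>'"
      then have "\<alpha>' \<noteq> 1" using True by simp
      then show False using partA[of \<alpha>' R S P Q] E1 E2 True by simp
    qed
  next
    case a1: False
    show ?thesis
    proof (cases "\<alpha>' = 1")
      case True
      then show ?thesis using partA[of \<alpha> P Q R S] E1 E2 a1 by simp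
    next
      case a2: False
      show ?thesis
      proof (cases "\<alpha>' = 0")
        case False
        then show ?thesis using core[OF E1 a1] by simp
      next
        case z: True
        show ?thesis
        proof (cases "\<alpha> = 0")
          case False
          then show ?thesis using core[OF E2 a2] by simp
        qed (use z in simp)
      qed
    qed
  qed
next
  assume "\<alpha> = \<alpha>'"
  then show "down_up_iso \<alpha> 0 0 \<alpha>' 0 0"
    unfolding down_up_iso_def using ring_iso_set_refl[of "down_up \<alpha> 0 0"] by (intro exI[of _ id]) simp
qed

end
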